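(* Let $q$ be a prime power and let $n$ be an odd positive integer coprime to $q$. The following are equivalent: (1) every monic irreducible factor of $x^{n}-1$ in $\mathbb{F}_{q^2}[x]$ is SCRIM; (2) for every prime divisor $l$ of $n$, every monic irreducible factor of $x^{l}-1$ in $\mathbb{F}_{q^2}[x]$ is SCRIM; (3) for every prime divisor $l$ of $n$, $\mathrm{ord}_l(q^2)$ is odd and $\mathrm{ord}_l(q)$ is even.
   Context: $\mathbb{F}_{q^2}$ is the finite field with $q^2$ elements. For $\alpha\in\mathbb{F}_{q^2}$ put $\bar\alpha=\alpha^q$, and for $f(x)=\sum_i f_ix^i$ put $\overline{f(x)}=\sum_i \bar f_i x^i$. For $f(x)$ with $f(0)\neq 0$, $f^*(x)=x^{\deg f}f(0)^{-1}f(1/x)$ and $f^\dagger(x)=\overline{f^*(x)}$. A polynomial is SCRIM if it is monic, irreducible over $\mathbb{F}_{q^2}$, has nonzero constant term, and satisfies $f=f^\dagger$. $\mathrm{ord}_l(a)$ denotes the multiplicative order of $a$ modulo $l$. *)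

theory Defs
  imports "HOL-Computational_Algebra.Computational_Algebra" "HOL-Number_Theory.Pocklington"
begin

text \<open>Conjugation on F_{q^2}: bar a = a^q, extended coefficientwise to polynomials.\<close>
definition poly_bar :: "nat \<Rightarrow> 'a::field poly \<Rightarrow> 'a poly" where
  "poly_bar q f = map_poly (\<lambda>a. a ^ q) f"

text \<open>Reciprocal f*(x) = x^(deg f) f(0)^(-1) f(1/x); reflect_poly f is x^(deg f) f(1/x)
  for f with nonzero constant term.\<close>
definition recip :: "'a::field poly \<Rightarrow> 'a poly" where
  "recip f = Polynomial.smult (inverse (Polynomial.coeff f 0)) (reflect_poly f)"

definition dagger :: "nat \<Rightarrow> 'a::field poly \<Rightarrow> 'a poly" where
  "dagger q f = poly_bar q (recip f)"

definition SCRIM :: "nat \<Rightarrow> 'a::field poly \<Rightarrow> bool" where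
  "SCRIM q f \<longleftrightarrow> lead_coeff f = 1 \<and> irreducible f \<and> Polynomial.coeff f 0 \<noteq> 0 \<and> f = dagger q f"

definition monic_irred_factors :: "'a::field poly \<Rightarrow> 'a poly set" where
  "monic_irred_factors g = {f. lead_coeff f = 1 \<and> irreducible f \<and> f dvd g}"

definition prime_power :: "nat \<Rightarrow> bool" where
  "prime_power q \<longleftrightarrow> (\<exists>p k. prime p \<and> k > 0 \<and> q = p ^ k)"

end

theory Submission
  imports Defs
begin



lemma pcompose_diff_dvd:
  fixes g u v :: "'a::comm_ring_1 poly"
  shows "(u - v) dvd (pcompose g u - pcompose g v)"
proof (induction g rule: pCons_induct)
  case 0 then show ?case by simp
next
  case (pCons a g)
  have "pcompose (pCons a g) u - pcompose (pCons a g) v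
        = (u - v) * pcompose g u + v * (pcompose g u - pcompose g v)"
    by (simp add: pcompose_pCons algebra_simps)
  then show ?case using pCons.IH by (simp add: dvd_add)
qed

lemma power_diff_dvd_mod:
  fixes x :: "'a::comm_ring_1"
  assumes "a mod l = b mod l"
  shows "(x ^ l - 1) dvd (x ^ a - x ^ b)"
proof -
  have main: "(x ^ l - 1) dvd (x ^ a - x ^ b)" if "b \<le> a" "a mod l = b mod l" for a b
  proof -
    from that have "l dvd a - b" using mod_eq_dvd_iff_nat by blast
    then obtain t where "a - b = l * t" by (elim dvdE)
    then have t: "a = b + l * t" using that(1) by simp
    have "x ^ a - x ^ b = x ^ b * ((x ^ l) ^ t - 1)"
      by (simp add: t power_add power_mult algebra_simps)
    moreover have "(x ^ l - 1) dvd ((x ^ l) ^ t - 1)"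
      by (simp add: power_diff_1_eq)
    ultimately show ?thesis by simp
  qed
  show ?thesis
  proof (cases "b \<le> a")
    case True then show ?thesis using main assms by blast
  next
    case False
    then have "(x ^ l - 1) dvd (x ^ b - x ^ a)" using main assms by simp
    then have "(x ^ l - 1) dvd - (x ^ a - x ^ b)" by simp
    then show ?thesis by (simp only: dvd_minus_iff)
  qed
qed

lemma frobenius_poly:
  fixes h :: "'a::field poly"
  assumes "prime CHAR('a)" "N = CHAR('a) ^ j"
  shows "h ^ N = pcompose (map_poly (\<lambda>c. c ^ N) h) ([:0,1:] ^ N)"
proof (induction h rule: pCons_induct)
  case 0
  have "N > 0" using assms prime_gt_0_nat by auto
  then show ?case by simp
next
  case (pCons a h)
  have N0: "N > 0" using assms prime_gt_0_nat by auto
  have pr: "prime CHAR('a poly)" using assms by simp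
  have Np: "N = CHAR('a poly) ^ j" using assms by simp
  have "pCons a h = [:a:] + [:0,1:] * h" by simp
  then have "(pCons a h) ^ N = [:a:] ^ N + ([:0,1:] * h) ^ N"
    using freshmans_dream'[OF pr Np] by metis
  also have "[:a:] ^ N = [:a ^ N:]" by (induction N) (auto simp: algebra_simps)
  also have "([:0,1:] * h) ^ N = [:0,1:] ^ N * pcompose (map_poly (\<lambda>c. c ^ N) h) ([:0,1:] ^ N)"
    unfolding power_mult_distrib pCons.IH ..
  finally show ?case using N0
    by (simp add: map_poly_pCons pcompose_pCons zero_power)
qed




lemma root_count:
  fixes f :: "'a::field poly" and P :: "'a poly poly"
  assumes "prime_elem f" "finite A" "\<forall>y\<in>A. f dvd poly P y"
    "\<forall>a\<in>A. \<forall>b\<in>A. a \<noteq> b \<longrightarrow> \<not> f dvd (a - b)"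
    "\<exists>i. \<not> f dvd Polynomial.coeff P i"
  shows "card A \<le> degree P"
  using assms(2-)
proof (induction "degree P" arbitrary: P A)
  case 0
  show ?case
  proof (cases "A = {}")
    case False
    then obtain a where a: "a \<in> A" by blast
    have P: "P = [:Polynomial.coeff P 0:]" using 0(1) by (metis degree_0_id)
    have "poly P a = Polynomial.coeff P 0" by (subst P) simp
    then have d0: "f dvd Polynomial.coeff P 0" using 0 a by metis
    obtain i where i: "\<not> f dvd Polynomial.coeff P i" using 0 by blast
    have "i = 0" using i 0(1) coeff_eq_0[of P i] by (cases "i = 0") auto
    then show ?thesis using i d0 by simp
  qed simp
next
  case (Suc m)
  show ?case
  proof (cases "A = {}")
    case False
    then obtain a where a: "a \<in> A" by blast
    define S where "S = synthetic_div P a"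
    have PS: "P = [:-a, 1:] * S + [:poly P a:]"
      unfolding S_def by (rule synthetic_div_correct'[symmetric])
    have fa: "f dvd poly P a" using Suc a by blast
    have degS: "degree S = m" unfolding S_def using Suc(2) by (simp add: degree_synthetic_div)
    have rootsS: "\<forall>b\<in>A - {a}. f dvd poly S b"
    proof
      fix b assume b: "b \<in> A - {a}"
      have "poly P b = (b - a) * poly S b + poly P a"
        by (subst PS) (simp add: algebra_simps)
      moreover have "f dvd poly P b" using Suc b by blast
      ultimately have "f dvd (b - a) * poly S b" using fa
        by (metis dvd_add_left_iff)
      moreover have "\<not> f dvd (b - a)" using Suc(5) a b by blast
      ultimately show "f dvd poly S b" using assms(1) prime_elem_dvd_mult_iff by blast
    qed
    have coeffS: "\<exists>i. \<not> f dvd Polynomial.coeff S i"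
    proof (rule ccontr)
      assume "\<not> (\<exists>i. \<not> f dvd Polynomial.coeff S i)"
      then have allS: "\<And>i. f dvd Polynomial.coeff S i" by blast
      have "f dvd Polynomial.coeff P i" for i
      proof -
        have "Polynomial.coeff P i = - a * Polynomial.coeff S i + (case i of 0 \<Rightarrow> 0 | Suc j \<Rightarrow> Polynomial.coeff S j)
                + (if i = 0 then poly P a else 0)"
          by (subst PS) (simp add: coeff_pCons split: nat.split)
        moreover have "f dvd (case i of 0 \<Rightarrow> 0 | Suc j \<Rightarrow> Polynomial.coeff S j)"
          using allS by (simp split: nat.split)
        moreover have "f dvd (if i = 0 then poly P a else 0)" using fa by simp
        ultimately show ?thesis using allS by (simp add: dvd_add)
      qed
      then show False using Suc(6) by blast
    qed
    have "card (A - {a}) \<le> m"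
      using Suc(1)[of S "A - {a}"] degS rootsS coeffS Suc(3,5) by auto
    then show ?thesis using a Suc(2,3) by (simp add: card_Diff_singleton_if)
  qed simp
qed




lemma nt_odd_witness:
  fixes l q :: nat
  assumes "prime l" "odd (ord l (q^2))" "even (ord l q)"
  shows "\<exists>m. odd m \<and> [int q ^ m = - 1] (mod int l)"
proof -
  define m where "m = ord l (q^2)"
  have "[(q^2) ^ m = 1] (mod l)" unfolding m_def by (rule ord)
  then have "[int q ^ (2*m) = 1] (mod int l)"
    by (metis cong_int_iff of_nat_1 of_nat_power power_mult)
  then have "int l dvd (int q ^ m - 1) * (int q ^ m + 1)"
    by (simp add: cong_iff_dvd_diff power_mult algebra_simps power2_eq_square)
  moreover have pl: "prime (int l)" using assms(1) by simp
  ultimately have "int l dvd int q ^ m - 1 \<or> int l dvd int q ^ m + 1"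
    using prime_dvd_mult_iff by blast
  moreover have "\<not> int l dvd int q ^ m - 1"
  proof
    assume "int l dvd int q ^ m - 1"
    then have "[int q ^ m = 1] (mod int l)" by (simp add: cong_iff_dvd_diff)
    then have "[q ^ m = 1] (mod l)" by (metis cong_int_iff of_nat_1 of_nat_power)
    then have "ord l q dvd m" by (metis ord_divides)
    then show False using assms(2,3) m_def by auto
  qed
  ultimately have "[int q ^ m = - 1] (mod int l)" by (simp add: cong_iff_dvd_diff)
  then show ?thesis using assms(2) m_def by blast
qed

lemma nt_odd_witness_conv:
  fixes l q e :: nat
  assumes "prime l" "l > 2" "odd e" "[int q ^ e = - 1] (mod int l)"
  shows "odd (ord l (q^2)) \<and> even (ord l q)"
proof -
  have "[(int q ^ e) ^ 2 = (-1) ^ 2] (mod int l)" using assms(4) by (rule cong_pow)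
  then have "[int q ^ (2*e) = 1] (mod int l)" by (simp add: power_mult mult.commute)
  then have c2: "[q ^ (2*e) = 1] (mod l)" by (metis cong_int_iff of_nat_1 of_nat_power)
  then have "ord l (q^2) dvd e" by (metis ord_divides power_mult)
  then have o1: "odd (ord l (q^2))" using assms(3) by (auto elim: dvdE)
  have "even (ord l q)"
  proof (rule ccontr)
    assume od: "odd (ord l q)"
    have "ord l q dvd 2 * e" using c2 by (metis ord_divides)
    moreover have "coprime (ord l q) 2" using od by simp
    ultimately have "ord l q dvd e" using coprime_dvd_mult_right_iff by blast
    then have "[q ^ e = 1] (mod l)" by (metis ord_divides)
    then have "[int q ^ e = 1] (mod int l)" by (metis cong_int_iff of_nat_1 of_nat_power)
    then have "[-1 = (1::int)] (mod int l)" using assms(4) by (metis cong_sym cong_trans)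
    then have "int l dvd 2" by (simp add: cong_iff_dvd_diff)
    then have "l \<le> 2" by (metis dvd_imp_le int_dvd_int_iff of_nat_numeral zero_less_numeral)
    then show False using assms(2) by simp
  qed
  then show ?thesis using o1 by simp
qed

lemma nt_common_exponent:
  fixes n q :: nat
  assumes "\<forall>l \<in> prime_factors n. \<exists>m. odd m \<and> [int q ^ m = - 1] (mod int l)"
  shows "\<exists>J. odd J \<and> (\<forall>l \<in> prime_factors n. [int q ^ J = - 1] (mod int l))"
proof -
  define M where "M l = (SOME m. odd m \<and> [int q ^ m = - 1] (mod int l))" for l
  have M: "odd (M l) \<and> [int q ^ M l = - 1] (mod int l)" if "l \<in> prime_factors n" for l
    unfolding M_def using someI_ex[OF assms[rule_format, OF that]] .
  define J where "J = (\<Prod>l\<in>prime_factors n. M l)"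
  have oJ: "odd J"
  proof
    assume "even J"
    then have "2 dvd (\<Prod>l\<in>prime_factors n. M l)" unfolding J_def by simp
    then obtain l where "l \<in> prime_factors n" "2 dvd M l"
      using prime_dvd_prod_iff[of "prime_factors n" "2::nat" M] by auto
    then show False using M by blast
  qed
  have "[int q ^ J = - 1] (mod int l)" if l: "l \<in> prime_factors n" for l
  proof -
    have "M l dvd J" unfolding J_def using l by (intro dvd_prodI) auto
    then obtain t where t: "J = M l * t" by (elim dvdE)
    then have "odd t" using oJ by simp
    have "[(int q ^ M l) ^ t = (-1) ^ t] (mod int l)" using M[OF l] by (intro cong_pow) auto
    then show ?thesis using \<open>odd t\<close> t by (simp add: power_mult)
  qed
  then show ?thesis using oJ by blast
qed

lemma nt_lift:
  fixes z :: int and n :: nat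
  assumes "odd n" "\<forall>l. prime l \<and> l dvd n \<longrightarrow> [z = - 1] (mod int l)"
  shows "[z ^ n = - 1] (mod int n)"
  using assms
proof (induction n rule: less_induct)
  case (less n)
  show ?case
  proof (cases "n = 1")
    case True then show ?thesis by simp
  next
    case False
    have "n \<noteq> 0" using odd_pos[OF less.prems(1)] by simp
    obtain l where l: "prime l" "l dvd n" using False prime_factor_nat by blast
    then obtain n' where n': "n = l * n'" by (elim dvdE)
    have l2: "l > 1" using l prime_gt_1_nat by blast
    have "n' < n" using n' l2 \<open>n \<noteq> 0\<close> by auto
    have on': "odd n'" "odd l" using less.prems n' by auto
    have "[z ^ n' = - 1] (mod int n')"
      using less.IH[OF \<open>n' < n\<close> on'(1)] less.prems(2) n' by auto
    define w where "w = z ^ n'"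
    have wn': "int n' dvd 1 + w" using \<open>[z ^ n' = - 1] (mod int n')\<close> unfolding w_def
      by (simp add: cong_iff_dvd_diff add.commute)
    have "[z ^ n' = (-1) ^ n'] (mod int l)" using less.prems(2) l by (intro cong_pow) auto
    then have "[w = -1] (mod int l)" using on'(1) unfolding w_def by simp
    then have "[- w = - (-1)] (mod int l)" by (simp only: cong_minus_minus_iff)
    then have wl: "[- w = 1] (mod int l)" by simp
    define S where "S = (\<Sum>i<l. (- w) ^ i)"
    have "[S = (\<Sum>i<l. 1)] (mod int l)" unfolding S_def
      using wl by (intro cong_sum) (metis cong_pow power_one)
    then have "int l dvd S - int l" by (simp add: cong_iff_dvd_diff)
    then have "int l dvd S" by (metis dvd_diff_left_iff dvd_refl)
    have "1 - (- w) ^ l = (1 - (- w)) * S" unfolding S_def by (rule one_diff_power_eq)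
    then have eq: "1 + w ^ l = (1 + w) * S" using on'(2) by simp
    have "int n' * int l dvd (1 + w) * S"
      using wn' \<open>int l dvd S\<close> by (rule mult_dvd_mono)
    then have "int n dvd 1 + w ^ l" using eq n' by (simp add: mult.commute)
    moreover have "w ^ l = z ^ n" unfolding w_def n' by (simp add: power_mult[symmetric] mult.commute)
    ultimately show ?thesis by (simp add: cong_iff_dvd_diff add.commute)
  qed
qed




lemma pcompose_X_power: "pcompose ([:0,1:] ^ k) (r::'a::comm_ring_1 poly) = r ^ k"
  by (induction k) (simp_all add: pcompose_mult pcompose_pCons pcompose_1)

lemma monic_dvd_eq:
  fixes f g :: "'a::field poly"
  assumes "f dvd g" "lead_coeff f = 1" "lead_coeff g = 1" "degree g = degree f"
  shows "f = g"
proof -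
  obtain u where u: "g = f * u" using assms(1) by (elim dvdE)
  have "g \<noteq> 0" using assms(3) by auto
  then have "u \<noteq> 0" "f \<noteq> 0" using u by auto
  then have "degree u = 0" using assms(4) u degree_mult_eq by force
  then have "u = [:lead_coeff u:]" by (metis degree_0_id)
  moreover have "lead_coeff u = 1" using assms(2,3) u by (simp add: lead_coeff_mult)
  ultimately show ?thesis using u by simp
qed

lemma reflect_ident:
  fixes g :: "'a::comm_ring_1 poly"
  assumes "N > 0"
  shows "([:0,1:] ^ N - 1) dvd ([:0,1:] ^ degree g * pcompose g ([:0,1:] ^ (N - 1)) - reflect_poly g)"
proof (induction g rule: pCons_induct)
  case 0 then show ?case by simp
next
  case (pCons c g)
  show ?case
  proof (cases "g = 0")
    case True then show ?thesis by simp
  next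
    case False
    define X :: "'a poly" where "X = [:0,1:]"
    define G where "G = pcompose g (X ^ (N - 1))"
    define D where "D = degree g"
    have XN: "X * X ^ (N - 1) = X ^ N" using assms by (simp flip: power_Suc)
    have mc: "Polynomial.monom c (Suc D) = X ^ Suc D * [:c:]"
      by (subst mult.commute) (simp add: monom_altdef X_def)
    have "X ^ degree (pCons c g) * pcompose (pCons c g) (X ^ (N - 1)) - reflect_poly (pCons c g)
        = X ^ Suc D * ([:c:] + X ^ (N - 1) * G) - (reflect_poly g + Polynomial.monom c (Suc D))"
      using False by (simp add: pcompose_pCons reflect_poly_pCons' G_def D_def)
    also have "\<dots> = (X * X ^ (N - 1)) * X ^ D * G - reflect_poly g"
      by (simp add: mc algebra_simps)
    also have "\<dots> = (X ^ N - 1) * (X ^ D * G) + (X ^ D * G - reflect_poly g)"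
      unfolding XN by (simp add: algebra_simps)
    finally have eq: "X ^ degree (pCons c g) * pcompose (pCons c g) (X ^ (N - 1)) - reflect_poly (pCons c g)
        = (X ^ N - 1) * (X ^ D * G) + (X ^ D * G - reflect_poly g)" .
    have "(X ^ N - 1) dvd (X ^ D * G - reflect_poly g)"
      using pCons.IH unfolding X_def G_def D_def by simp
    then show ?thesis unfolding eq[unfolded X_def] using X_def by (simp add: dvd_add)
  qed
qed




lemma field_poly_irreducible_imp_prime_elem:
  fixes f :: "'a::field poly"
  assumes irr: "irreducible f"
  shows "prime_elem f"
proof (rule prime_elemI)
  show "f \<noteq> 0" using irr by auto
  show "\<not> is_unit f" using irr by (auto simp: irreducible_def)
  fix a b assume fab: "f dvd a * b"
  show "f dvd a \<or> f dvd b"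
  proof (cases "f dvd a")
    case True then show ?thesis by simp
  next
    case False
    define I where "I = {u * f + v * a | u v. True} - {0}"
    have "a \<noteq> 0" using False by auto
    have "a \<in> I" unfolding I_def using \<open>a \<noteq> 0\<close> by (auto intro: exI[of _ 0] exI[of _ 1])
    then obtain d where d: "d \<in> I" and dmin: "\<And>e. e \<in> I \<Longrightarrow> degree d \<le> degree e"
      using ex_has_least_nat[of "\<lambda>x. x \<in> I" a degree] by blast
    from d obtain u v where duv: "d = u * f + v * a" and "d \<noteq> 0" unfolding I_def by blast
    have dvd_of: "d dvd x" if "x = u' * f + v' * a" for x u' v'
    proof (rule ccontr)
      assume nd: "\<not> d dvd x"
      define r where "r = x mod d"
      have "r = x - (x div d) * d" unfolding r_def by (simp add: minus_div_mult_eq_mod)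
      also have "\<dots> = (u' - (x div d) * u) * f + (v' - (x div d) * v) * a"
        using that duv by (simp add: algebra_simps)
      finally have "r \<in> I" using nd unfolding I_def r_def by (auto simp: mod_eq_0_iff_dvd)
      then have "degree d \<le> degree r" by (rule dmin)
      moreover have "degree r < degree d" unfolding r_def
        using degree_mod_less_degree[OF \<open>d \<noteq> 0\<close> nd] .
      ultimately show False by simp
    qed
    have "d dvd f" by (rule dvd_of[of f 1 0]) simp
    have "d dvd a" by (rule dvd_of[of a 0 1]) simp
    from \<open>d dvd f\<close> obtain w where w: "f = d * w" by (elim dvdE)
    have "is_unit d \<or> is_unit w" using irr w by (auto simp: irreducible_def)
    moreover have "\<not> is_unit w"
    proof
      assume "is_unit w"
      then have "f dvd a" using w \<open>d dvd a\<close> mult_unit_dvd_iff by metis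
      then show False using False by simp
    qed
    ultimately have "is_unit d" by simp
    then obtain d' where d': "1 = d * d'" by (elim dvdE)
    have "b = (b * u * d') * f + (v * d') * (a * b)"
      using d' duv by (simp add: algebra_simps) (metis mult.assoc mult.commute mult.left_commute mult_1_right distrib_left)
    moreover have "f dvd (b * u * d') * f + (v * d') * (a * b)"
      using fab by (simp add: dvd_add)
    ultimately show ?thesis by metis
  qed
qed

lemma field_poly_exists_irreducible_factor:
  fixes p :: "'a::field poly"
  assumes "p \<noteq> 0" "\<not> is_unit p"
  shows "\<exists>g. irreducible g \<and> lead_coeff g = 1 \<and> g dvd p"
proof -
  have "\<exists>g. irreducible g \<and> g dvd p" using assms
  proof (induction "degree p" arbitrary: p rule: less_induct)
    case less
    show ?case
    proof (cases "irreducible p")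
      case True then show ?thesis using dvd_refl by blast
    next
      case False
      then obtain a b where ab: "p = a * b" "\<not> is_unit a" "\<not> is_unit b"
        using less.prems by (auto simp: irreducible_def)
      have "a \<noteq> 0" "b \<noteq> 0" using ab less.prems by auto
      have "degree b > 0" using ab(3) \<open>b \<noteq> 0\<close> is_unit_iff_degree by blast
      then have "degree a < degree p" using ab(1) degree_mult_eq[OF \<open>a \<noteq> 0\<close> \<open>b \<noteq> 0\<close>] by simp
      then obtain g where "irreducible g" "g dvd a" using less.hyps \<open>a \<noteq> 0\<close> ab(2) by blast
      then show ?thesis using ab(1) by (meson dvd_mult2)
    qed
  qed
  then obtain g where g: "irreducible g" "g dvd p" by blast
  define c where "c = inverse (lead_coeff g)"
  have "g \<noteq> 0" using g by auto
  then have "c \<noteq> 0" unfolding c_def by simp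
  have u: "is_unit [:c:]" using \<open>c \<noteq> 0\<close> by (simp add: is_unit_const_poly_iff dvd_field_iff)
  have "irreducible ([:c:] * g)" using g(1) irreducible_mult_unit_left[OF u] by simp
  moreover have "lead_coeff ([:c:] * g) = 1" using \<open>g \<noteq> 0\<close> unfolding c_def by (simp add: lead_coeff_mult)
  moreover have "[:c:] * g dvd p" using g(2) \<open>c \<noteq> 0\<close> by (simp add: smult_dvd_iff)
  ultimately show ?thesis by blast
qed




lemma char_setup:
  fixes q :: nat
  assumes "prime_power q" "card (UNIV :: 'a::{field,finite} set) = q^2"
  shows "prime CHAR('a) \<and> (\<exists>e>0. q = CHAR('a)^e)"
proof -
  obtain p k where pk: "prime p" "k > 0" "q = p^k" using assms(1) unfolding prime_power_def by blast
  have "CHAR('a) > 0" by (rule finite_imp_CHAR_pos) simp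
  then have pc: "prime CHAR('a)" by (rule prime_CHAR_semidom)
  have "CHAR('a) dvd card (UNIV :: 'a set)" by (rule CHAR_dvd_CARD)
  then have "CHAR('a) dvd p ^ (k * 2)" using assms(2) pk by (simp add: power_mult)
  then have "CHAR('a) dvd p" using pc prime_dvd_power by blast
  then have "CHAR('a) = p" using pc pk(1) primes_dvd_imp_eq by blast
  then show ?thesis using pc pk by blast
qed

lemma power_card_field:
  fixes x :: "'a :: {field,finite}"
  shows "x ^ card (UNIV :: 'a set) = x"
proof (cases "x = 0")
  case False
  have "x * (\<Prod>y\<in>UNIV-{0}. x * y) = x * x ^ (card (UNIV :: 'a set) - 1) * \<Prod>(UNIV-{0})"
    by (simp add: prod.distrib mult_ac)
  also have "x * x ^ (card (UNIV :: 'a set) - 1) = x ^ Suc (card (UNIV :: 'a set) - 1)"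
    by (subst power_Suc) auto
  also have "Suc (card (UNIV :: 'a set) - 1) = card (UNIV :: 'a set)"
    using finite_UNIV_card_ge_0[where ?'a = 'a] by simp
  also have "(\<Prod>y\<in>UNIV-{0}. x * y) = (\<Prod>y\<in>UNIV-{0}. y)"
    by (rule prod.reindex_bij_witness[of _ "\<lambda>y. y / x" "\<lambda>y. x * y"]) (use False in auto)
  finally show ?thesis
    by simp
qed (use finite_UNIV_card_ge_0[where ?'a = 'a] in auto)

lemma power_card_pow_field:
  fixes x :: "'a :: {field,finite}"
  shows "x ^ (card (UNIV :: 'a set) ^ i) = x"
proof (induction i)
  case (Suc i)
  then show ?case by (simp only: power_Suc2 power_mult power_card_field)
qed simp

lemma frob_Qi:
  fixes h :: "'a::{field,finite} poly"
  assumes "prime CHAR('a)" "q = CHAR('a)^e" "card (UNIV :: 'a set) = q^2"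
  shows "h ^ ((q^2)^i) = pcompose h ([:0,1:] ^ ((q^2)^i))"
proof -
  have N: "(q^2)^i = CHAR('a) ^ (e*2*i)" using assms(2) by (simp add: power_mult)
  have "h ^ ((q^2)^i) = pcompose (map_poly (\<lambda>c. c ^ ((q^2)^i)) h) ([:0,1:] ^ ((q^2)^i))"
    by (rule frobenius_poly[OF assms(1) N])
  also have "map_poly (\<lambda>c. c ^ ((q^2)^i)) h = h"
    by (rule map_poly_idI) (metis assms(3) power_card_pow_field)
  finally show ?thesis .
qed

lemma dvd_comp_Qi:
  fixes f :: "'a::{field,finite} poly"
  assumes "prime CHAR('a)" "q = CHAR('a)^e" "card (UNIV :: 'a set) = q^2"
  shows "f dvd pcompose f ([:0,1:] ^ ((q^2)^i))"
proof -
  have "q > 0" using assms(3) by (cases "q = 0") auto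
  have "f dvd f ^ ((q^2)^i)" using \<open>q > 0\<close> by (simp add: dvd_power)
  then show ?thesis using frob_Qi[OF assms] by metis
qed

lemma pcompose_dvd_mono:
  fixes a b r :: "'a::comm_ring_1 poly"
  assumes "a dvd b" shows "pcompose a r dvd pcompose b r"
  using assms by (auto elim!: dvdE simp: pcompose_mult)

lemma dagger_iff:
  fixes f :: "'a::{field,finite} poly"
  assumes ch: "prime CHAR('a)" "q = CHAR('a)^e" "card (UNIV :: 'a set) = q^2"
    and f: "lead_coeff f = 1" "irreducible f" "f dvd [:0,1:] ^ N - 1" and N: "N > 0"
  shows "SCRIM q f \<longleftrightarrow> f dvd pcompose f ([:0,1:] ^ ((N - 1) * q))"
proof -
  define X :: "'a poly" where "X = [:0,1:]"
  have q0: "q > 0" using ch(3) by (cases "q = 0") auto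
  define c0 where "c0 = Polynomial.coeff f 0"
  have c0: "c0 \<noteq> 0"
  proof
    assume "c0 = 0"
    then have "poly f 0 = 0" unfolding c0_def by (simp add: poly_0_coeff_0)
    moreover obtain u where "[:0,1:] ^ N - 1 = f * u" using f(3) by (elim dvdE)
    ultimately have "poly ([:0,1:] ^ N - 1) 0 = (0::'a)" by simp
    then show False using N by (simp add: zero_power)
  qed
  have pf: "prime_elem f" using f(2) by (rule field_poly_irreducible_imp_prime_elem)
  have nX: "\<not> f dvd X"
  proof
    assume "f dvd X"
    moreover have "X dvd X ^ N" using N by (simp add: dvd_power)
    ultimately have "f dvd X ^ N" by (rule dvd_trans)
    then have "f dvd X ^ N - (X ^ N - 1)" using f(3) unfolding X_def by (rule dvd_diff)
    then have "is_unit f" by simp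
    then show False using f(2) by (auto simp: irreducible_def)
  qed
  define h where "h = Polynomial.smult (inverse c0) (reflect_poly f)"
  have dag: "dagger q f = map_poly (\<lambda>a. a ^ q) h"
    unfolding dagger_def poly_bar_def recip_def h_def c0_def ..
  have lh: "lead_coeff h = 1"
  proof -
    have "lead_coeff (reflect_poly f) = c0"
      using c0 unfolding c0_def by (simp add: coeff_reflect_poly)
    then show ?thesis unfolding h_def using c0 by simp
  qed
  have dh: "degree h = degree f" unfolding h_def using c0 unfolding c0_def by simp
  have lbh: "lead_coeff (map_poly (\<lambda>a. a ^ q) h) = 1"
    using lh q0 by (subst lead_coeff_map_poly_nz) (simp_all add: zero_power)
  have dbh: "degree (map_poly (\<lambda>a. a ^ q) h) = degree f"
    using dh by (subst degree_map_poly) simp_all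
  have c0f: "Polynomial.coeff f 0 \<noteq> 0" using c0 unfolding c0_def .
  have step1: "SCRIM q f \<longleftrightarrow> f dvd map_poly (\<lambda>a. a ^ q) h"
  proof
    assume "SCRIM q f"
    then have "f = dagger q f" unfolding SCRIM_def by blast
    then show "f dvd map_poly (\<lambda>a. a ^ q) h" using dag by (metis dvd_refl)
  next
    assume "f dvd map_poly (\<lambda>a. a ^ q) h"
    then have "f = map_poly (\<lambda>a. a ^ q) h" using monic_dvd_eq f(1) lbh dbh by blast
    then show "SCRIM q f" unfolding SCRIM_def using f(1,2) c0f dag by simp
  qed
  have bb: "(map_poly (\<lambda>a. a ^ q) h) ^ q = pcompose h (X ^ q)"
  proof -
    have "(map_poly (\<lambda>a. a ^ q) h) ^ q
        = pcompose (map_poly (\<lambda>c. c ^ q) (map_poly (\<lambda>a. a ^ q) h)) ([:0,1:] ^ q)"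
      by (rule frobenius_poly[OF ch(1) ch(2)])
    also have "map_poly (\<lambda>c. c ^ q) (map_poly (\<lambda>a. a ^ q) h) = map_poly ((\<lambda>c. c ^ q) \<circ> (\<lambda>a. a ^ q)) h"
      using q0 by (subst map_poly_map_poly) (simp_all add: zero_power)
    also have "\<dots> = h"
    proof (rule map_poly_idI)
      fix x :: 'a
      have "((\<lambda>c. c ^ q) \<circ> (\<lambda>a. a ^ q)) x = x ^ card (UNIV :: 'a set)"
        using ch(3) by (simp add: power_mult[symmetric] power2_eq_square)
      then show "((\<lambda>c. c ^ q) \<circ> (\<lambda>a. a ^ q)) x = x" by (simp add: power_card_field)
    qed
    finally show ?thesis unfolding X_def .
  qed
  have step2: "f dvd map_poly (\<lambda>a. a ^ q) h \<longleftrightarrow> f dvd pcompose (reflect_poly f) (X ^ q)"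
  proof -
    have "f dvd map_poly (\<lambda>a. a ^ q) h \<longleftrightarrow> f dvd (map_poly (\<lambda>a. a ^ q) h) ^ q"
      using prime_elem_dvd_power_iff[OF pf] q0 by simp
    also have "\<dots> \<longleftrightarrow> f dvd pcompose h (X ^ q)" using bb by simp
    also have "pcompose h (X ^ q) = Polynomial.smult (inverse c0) (pcompose (reflect_poly f) (X ^ q))"
      unfolding h_def by (rule pcompose_smult)
    also have "f dvd \<dots> \<longleftrightarrow> f dvd pcompose (reflect_poly f) (X ^ q)"
      using c0 by (simp add: dvd_smult_iff)
    finally show ?thesis .
  qed
  define d where "d = degree f"
  define m where "m = (N - 1) * q"
  have E: "f dvd X ^ (q * d) * pcompose f (X ^ m) - pcompose (reflect_poly f) (X ^ q)"
  proof -
    have "(X ^ N - 1) dvd (X ^ d * pcompose f (X ^ (N - 1)) - reflect_poly f)"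
      unfolding X_def d_def by (rule reflect_ident[OF N])
    then have c1: "pcompose (X ^ N - 1) (X ^ q) dvd pcompose (X ^ d * pcompose f (X ^ (N - 1)) - reflect_poly f) (X ^ q)"
      by (rule pcompose_dvd_mono)
    have c2: "pcompose (X ^ N - 1) (X ^ q) = X ^ (q * N) - X ^ 0"
      unfolding X_def by (simp add: pcompose_diff pcompose_X_power pcompose_1 power_mult)
    have c3: "pcompose (X ^ d * pcompose f (X ^ (N - 1)) - reflect_poly f) (X ^ q)
        = X ^ (q * d) * pcompose f (X ^ m) - pcompose (reflect_poly f) (X ^ q)"
    proof -
      have "pcompose (X ^ d * pcompose f (X ^ (N - 1)) - reflect_poly f) (X ^ q)
          = pcompose (X ^ d) (X ^ q) * pcompose f (pcompose (X ^ (N - 1)) (X ^ q)) - pcompose (reflect_poly f) (X ^ q)"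
        by (simp add: pcompose_diff pcompose_mult pcompose_assoc)
      also have "pcompose (X ^ d) (X ^ q) = X ^ (q * d)"
        unfolding X_def by (simp add: pcompose_X_power power_mult)
      also have "pcompose (X ^ (N - 1)) (X ^ q) = X ^ m"
        unfolding X_def m_def by (simp add: pcompose_X_power mult.commute flip: power_mult)
      finally show ?thesis .
    qed
    have c4: "(X ^ N - 1) dvd X ^ (q * N) - X ^ 0"
      by (rule power_diff_dvd_mod) simp
    have "X ^ (q * N) - X ^ 0 dvd X ^ (q * d) * pcompose f (X ^ m) - pcompose (reflect_poly f) (X ^ q)"
      using c1 unfolding c2 c3 .
    then have "(X ^ N - 1) dvd X ^ (q * d) * pcompose f (X ^ m) - pcompose (reflect_poly f) (X ^ q)"
      by (rule dvd_trans[OF c4])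
    then show ?thesis using f(3) unfolding X_def by (rule dvd_trans[rotated])
  qed
  have step3: "f dvd pcompose (reflect_poly f) (X ^ q) \<longleftrightarrow> f dvd pcompose f (X ^ m)"
  proof -
    have "f dvd pcompose (reflect_poly f) (X ^ q) \<longleftrightarrow> f dvd X ^ (q * d) * pcompose f (X ^ m)"
    proof -
      have "f dvd (X ^ (q * d) * pcompose f (X ^ m) - pcompose (reflect_poly f) (X ^ q)) + pcompose (reflect_poly f) (X ^ q)
            \<longleftrightarrow> f dvd pcompose (reflect_poly f) (X ^ q)"
        by (rule dvd_add_right_iff[OF E])
      then show ?thesis by simp
    qed
    also have "\<dots> \<longleftrightarrow> f dvd pcompose f (X ^ m)"
      using nX prime_elem_dvd_mult_iff[OF pf] prime_elem_dvd_power[OF pf] by blast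
    finally show ?thesis .
  qed
  show ?thesis using step1 step2 step3 unfolding m_def X_def by simp
qed




lemma low_deg_not_dvd:
  fixes g a b :: "'a::field poly"
  assumes "degree a < degree g" "degree b < degree g" "a \<noteq> b"
  shows "\<not> g dvd a - b"
proof
  assume "g dvd a - b"
  moreover have "a - b \<noteq> 0" using assms(3) by simp
  ultimately have "degree g \<le> degree (a - b)" by (rule dvd_imp_degree_le)
  moreover have "degree (a - b) \<le> max (degree a) (degree b)" by (rule degree_diff_le_max)
  ultimately show False using assms(1,2) by simp
qed

lemma comp_mod:
  fixes g :: "'a::comm_ring_1 poly"
  assumes "g dvd [:0,1:] ^ l - 1" "g dvd pcompose g ([:0,1:] ^ a)" "a mod l = b mod l"
  shows "g dvd pcompose g ([:0,1:] ^ b)"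
proof -
  have "([:0,1:] ^ a - [:0,1:] ^ b) dvd pcompose g ([:0,1:] ^ a) - pcompose g ([:0,1:] ^ b)"
    by (rule pcompose_diff_dvd)
  moreover have "([:0,1:] ^ l - 1) dvd ([:0,1:] ^ a - [:0,1:] ^ b :: 'a poly)"
    using assms(3) by (rule power_diff_dvd_mod)
  ultimately have "g dvd pcompose g ([:0,1:] ^ a) - pcompose g ([:0,1:] ^ b)"
    using assms(1) by (meson dvd_trans)
  then show ?thesis using assms(2) by (simp add: dvd_diff_right_iff)
qed

lemma comp_mult:
  fixes g :: "'a::comm_ring_1 poly"
  assumes "g dvd pcompose g ([:0,1:] ^ a)" "g dvd pcompose g ([:0,1:] ^ b)"
  shows "g dvd pcompose g ([:0,1:] ^ (a * b))"
proof -
  obtain u where u: "pcompose g ([:0,1:] ^ a) = g * u" using assms(1) by (elim dvdE)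
  have "pcompose g ([:0,1:] ^ (a * b)) = pcompose (pcompose g ([:0,1:] ^ a)) ([:0,1:] ^ b)"
  proof -
    have "pcompose ([:0,1:] ^ a) ([:0,1:] ^ b) = ([:0,1:] :: 'a poly) ^ (a * b)"
      by (simp add: pcompose_X_power mult.commute flip: power_mult)
    then show ?thesis by (simp only: pcompose_assoc[symmetric])
  qed
  also have "\<dots> = pcompose g ([:0,1:] ^ b) * pcompose u ([:0,1:] ^ b)"
    by (simp add: u pcompose_mult)
  finally show ?thesis using assms(2) by simp
qed

lemma irr_not_dvd_X:
  fixes g :: "'a::field poly"
  assumes "irreducible g" "g dvd [:0,1:] ^ N - 1" "N > 0"
  shows "\<not> g dvd [:0,1:]"
proof
  assume "g dvd [:0,1:]"
  moreover have "[:0,1:] dvd ([:0,1:] :: 'a poly) ^ N" using assms(3) by (simp add: dvd_power)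
  ultimately have "g dvd [:0,1:] ^ N" by (rule dvd_trans)
  then have "g dvd [:0,1:] ^ N - ([:0,1:] ^ N - 1)" using assms(2) by (rule dvd_diff)
  then have "is_unit g" by simp
  then show False using assms(1) by (auto simp: irreducible_def)
qed

lemma card_low_degree:
  "card (Poly ` {xs :: 'a::{field,finite} list. length xs = d}) = card (UNIV :: 'a set) ^ d"
proof -
  have "inj_on Poly {xs :: 'a list. length xs = d}"
  proof (rule inj_onI)
    fix xs ys :: "'a list" assume xs: "xs \<in> {xs. length xs = d}" and ys: "ys \<in> {xs. length xs = d}"
      and eq: "Poly xs = Poly ys"
    have "nth_default 0 xs i = nth_default 0 ys i" for i
      using arg_cong[OF eq, of "\<lambda>p. Polynomial.coeff p i"] by simp
    then show "xs = ys" using xs ys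
      by (intro nth_equalityI) (auto simp: nth_default_def split: if_splits, metis)
  qed
  then have "card (Poly ` {xs :: 'a list. length xs = d}) = card {xs :: 'a list. length xs = d}"
    by (rule card_image)
  moreover have "card {xs :: 'a list. length xs = d} = card (UNIV :: 'a set) ^ d"
    using card_lists_length_eq[of "UNIV :: 'a set" d] by simp
  ultimately show ?thesis by simp
qed

lemma degree_Poly_less:
  assumes "length xs = d" "d > 0"
  shows "degree (Poly xs) < d"
proof -
  have "degree (Poly xs) \<le> d - 1"
    by (rule degree_le) (use assms in \<open>auto simp: nth_default_def\<close>)
  then show ?thesis using assms(2) by simp
qed

lemma degree_bound:
  fixes g :: "'a::{field,finite} poly"
  assumes ch: "prime CHAR('a)" "q = CHAR('a)^e" "card (UNIV :: 'a set) = q^2"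
    and g: "irreducible g" "g dvd [:0,1:] ^ l - 1" "l > 1" and k: "[(q^2)^k = 1] (mod l)" "k > 0"
  shows "degree g \<le> k"
proof -
  define X :: "'a poly" where "X = [:0,1:]"
  define d where "d = degree g"
  define N where "N = (q^2)^k"
  have q1: "q > 1"
  proof -
    have "card (UNIV :: 'a set) \<ge> 2"
      using card_mono[of "UNIV :: 'a set" "{0,1}"] by simp
    then show ?thesis using ch(3) by (cases q; cases "q - 1") auto
  qed
  have "g \<noteq> 0" "\<not> is_unit g" using g(1) by (auto simp: irreducible_def)
  then have d0: "d > 0" unfolding d_def using is_unit_iff_degree by blast
  define Y where "Y = Poly ` {xs :: 'a list. length xs = d}"
  define P :: "'a poly poly" where "P = Polynomial.monom 1 N - Polynomial.monom 1 1"
  have Q1: "1 < q^2" using q1 by (metis one_less_power zero_less_numeral)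
  have N1: "N > 1" unfolding N_def using one_less_power[OF Q1 k(2)] .
  have pg: "prime_elem g" using g(1) by (rule field_poly_irreducible_imp_prime_elem)
  have XN: "g dvd X ^ N - X ^ 1"
  proof -
    have "N mod l = 1 mod l" using k(1) unfolding N_def cong_def .
    then have "(X ^ l - 1) dvd X ^ N - X ^ 1" by (rule power_diff_dvd_mod)
    then show ?thesis using g(2) unfolding X_def by (rule dvd_trans[rotated])
  qed
  have "card Y \<le> degree P"
  proof (rule root_count[OF pg])
    have "finite {xs :: 'a list. length xs = d}" using finite_lists_length_eq[of "UNIV::'a set" d] by simp
    then show "finite Y" unfolding Y_def by simp
    show "\<forall>y\<in>Y. g dvd poly P y"
    proof
      fix y assume "y \<in> Y"
      have "poly P y = y ^ N - y" unfolding P_def by (simp add: poly_monom)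
      also have "y ^ N = pcompose y (X ^ N)" unfolding N_def X_def by (rule frob_Qi[OF ch])
      also have "pcompose y (X ^ N) - y = pcompose y (X ^ N) - pcompose y (X ^ 1)"
        unfolding X_def by simp
      finally have eq: "poly P y = pcompose y (X ^ N) - pcompose y (X ^ 1)" .
      have "(X ^ N - X ^ 1) dvd pcompose y (X ^ N) - pcompose y (X ^ 1)" by (rule pcompose_diff_dvd)
      then show "g dvd poly P y" unfolding eq using XN by (rule dvd_trans[rotated])
    qed
    show "\<forall>a\<in>Y. \<forall>b\<in>Y. a \<noteq> b \<longrightarrow> \<not> g dvd a - b"
    proof (intro ballI impI)
      fix a b assume "a \<in> Y" "b \<in> Y" "a \<noteq> b"
      then obtain xs ys where "a = Poly xs" "b = Poly ys" "length xs = d" "length ys = d"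
        unfolding Y_def by blast
      then have "degree a < degree g" "degree b < degree g"
        using degree_Poly_less d0 unfolding d_def by blast+
      then show "\<not> g dvd a - b" using low_deg_not_dvd \<open>a \<noteq> b\<close> by blast
    qed
    show "\<exists>i. \<not> g dvd Polynomial.coeff P i"
    proof
      have "Polynomial.coeff P 1 = -1" unfolding P_def using N1 by (simp add: coeff_monom)
      then show "\<not> g dvd Polynomial.coeff P 1" using \<open>\<not> is_unit g\<close> by simp
    qed
  qed
  moreover have "degree P \<le> N"
    unfolding P_def using N1 degree_diff_le_max[of "Polynomial.monom (1::'a poly) N" "Polynomial.monom 1 1"]
    by (simp add: degree_monom_eq)
  moreover have "card Y = (q^2)^d" unfolding Y_def using card_low_degree ch(3) by metis
  ultimately have "(q^2)^d \<le> (q^2)^k" unfolding N_def by simp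
  then show ?thesis unfolding d_def[symmetric] using power_le_imp_le_exp[OF Q1] by blast
qed




lemma exp_disjoint:
  fixes q l m k i j :: nat
  assumes l: "prime l" "l > 2" and cQ: "coprime l (q^2)"
    and kord: "[(q^2)^k = 1] (mod l)" and k0: "k > 0"
    and m: "m = (l - 1) * q"
    and eq: "(m * (q^2)^i) mod l = (q^2)^j mod l"
  shows "odd (ord l (q^2)) \<and> even (ord l q)"
proof -
  define z where "z = int q"
  have l1: "l \<ge> 1" using l by simp
  have "[m * (q^2)^i = (q^2)^j] (mod l)" using eq by (simp add: cong_def)
  then have "[int (m * (q^2)^i) = int ((q^2)^j)] (mod int l)"
    using cong_int_iff by blast
  then have c0: "[(int l - 1) * z * z^(2*i) = z^(2*j)] (mod int l)"
    using l1 by (simp add: m z_def of_nat_diff power_mult)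
  have "[(int l - 1) * z * z^(2*i) = (- 1) * z * z^(2*i)] (mod int l)"
    by (intro cong_mult cong_refl) (simp add: cong_iff_dvd_diff)
  then have c1: "[-(z * z^(2*i)) = z^(2*j)] (mod int l)"
    using c0 by (metis (no_types, lifting) cong_sym cong_trans mult_minus1 mult.assoc)
  define w where "w = z^(2*(k-1)*i) * z^(2*k-1)"
  have c2: "[-(z * z^(2*i)) * w = z^(2*j) * w] (mod int l)"
    by (rule cong_mult[OF c1 cong_refl])
  have e1: "z * z^(2*i) * w = (z^(2*k))^(i+1)"
  proof -
    have "z * z^(2*i) * w = z^(1 + 2*i + 2*(k-1)*i + (2*k-1))"
      unfolding w_def by (simp add: power_add)
    also have "1 + 2*i + 2*(k-1)*i + (2*k-1) = 2*k*(i+1)"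
      using k0 by (cases k) (simp_all add: algebra_simps)
    finally show ?thesis by (simp only: power_mult)
  qed
  define e where "e = 2*j + 2*(k-1)*i + (2*k-1)"
  have e2: "z^(2*j) * w = z^e" unfolding w_def e_def by (simp add: power_add)
  have oe: "odd e" unfolding e_def using k0 by (cases k) simp_all
  have "[z^(2*k) = 1] (mod int l)"
    using kord unfolding z_def by (metis cong_int_iff of_nat_1 of_nat_power power_mult)
  then have "[(z^(2*k))^(i+1) = 1^(i+1)] (mod int l)" by (rule cong_pow)
  then have "[-((z^(2*k))^(i+1)) = -1] (mod int l)" by (simp add: cong_minus_minus_iff)
  moreover have "[-((z^(2*k))^(i+1)) = z^e] (mod int l)" using c2 e1 e2 by simp
  ultimately have "[z^e = -1] (mod int l)" by (metis cong_sym cong_trans)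
  then show ?thesis using nt_odd_witness_conv[OF l oe] unfolding z_def by blast
qed




lemma m2:
  fixes q l e :: nat
  assumes ch: "prime CHAR('a)" "q = CHAR('a)^e" "card (UNIV :: 'a::{field,finite} set) = q^2"
    and l: "prime l" "l > 2" "coprime l q" "of_nat l \<noteq> (0::'a)"
    and all: "\<forall>f \<in> monic_irred_factors ([:0,1::'a:]^l - 1). SCRIM q f"
  shows "odd (ord l (q^2)) \<and> even (ord l q)"
proof (rule ccontr)
  assume neg: "\<not> (odd (ord l (q^2)) \<and> even (ord l q))"
  define X :: "'a poly" where "X = [:0,1:]"
  define Q where "Q = q^2"
  define k where "k = ord l Q"
  define m where "m = (l - 1) * q"
  have cQ: "coprime l Q" using l(3) unfolding Q_def by simp
  have k0: "k > 0" unfolding k_def using cQ by simp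
  have kord: "[Q^k = 1] (mod l)" unfolding k_def by (rule ord)
  define Phi where "Phi = (\<Sum>i<l. X^i)"
  have XP: "X^l - 1 = (X - 1) * Phi" unfolding Phi_def by (rule power_diff_1_eq)
  have Xl: "X ^ l = Polynomial.monom 1 l" unfolding X_def by (simp add: monom_altdef)
  have cXl: "Polynomial.coeff (X^l - 1) l = 1" using l(2) by (simp add: Xl coeff_monom)
  have Phi0: "Phi \<noteq> 0" using XP cXl by auto
  have X1: "X - 1 = [:-1, 1:]" unfolding X_def
    by (rule poly_eqI) (simp add: coeff_pCons coeff_1 split: nat.split)
  have Phinu: "\<not> is_unit Phi"
  proof
    assume "is_unit Phi"
    then have "degree Phi = 0" using is_unit_iff_degree[OF Phi0] by simp
    moreover have "degree (X - 1) \<le> 1" unfolding X1 by simp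
    ultimately have "degree (X^l - 1) \<le> 1" unfolding XP using degree_mult_le[of "X - 1" Phi] by simp
    then have "Polynomial.coeff (X^l - 1) l = 0" using l(2) by (intro coeff_eq_0) simp
    then show False using cXl by simp
  qed
  obtain g where g: "irreducible g" "lead_coeff g = 1" "g dvd Phi"
    using field_poly_exists_irreducible_factor[OF Phi0 Phinu] by blast
  have gX: "g dvd X^l - 1" unfolding XP using g(3) by simp
  have gX': "g dvd [:0,1:]^l - 1" using gX unfolding X_def .
  have "g \<in> monic_irred_factors ([:0,1::'a:]^l - 1)"
    unfolding monic_irred_factors_def using g gX' by simp
  then have "SCRIM q g" using all by blast
  then have scr: "g dvd pcompose g (X^m)"
    using dagger_iff[OF ch g(2) g(1) gX'] l(2) unfolding m_def X_def by simp
  have pg: "prime_elem g" using g(1) by (rule field_poly_irreducible_imp_prime_elem)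
  have "g \<noteq> 0" "\<not> is_unit g" using g(1) by (auto simp: irreducible_def)
  then have dg: "degree g > 0" using is_unit_iff_degree by blast
  have gd: "degree g \<le> k"
    using degree_bound[OF ch g(1) gX'] l(2) kord k0 unfolding Q_def by simp
  have nX1: "\<not> g dvd X - 1"
  proof
    assume gd1: "g dvd X - 1"
    have "degree g \<le> degree (X - 1)" using gd1 by (rule dvd_imp_degree_le) (simp add: X1)
    then have "degree g = degree (X - 1)" using dg by (simp add: X1)
    then have "g = X - 1" using monic_dvd_eq[OF gd1 g(2)] by (simp add: X1)
    then have "X - 1 dvd Phi" using g(3) by simp
    then obtain u where "Phi = (X - 1) * u" by (elim dvdE)
    then have "poly Phi 1 = 0" unfolding X_def by simp
    moreover have "poly Phi 1 = of_nat l" unfolding Phi_def X_def by (simp add: poly_sum)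
    ultimately show False using l(4) by simp
  qed
  have nX: "\<not> g dvd X" using irr_not_dvd_X[OF g(1) gX'] l(2) unfolding X_def by simp
  have key: "\<not> g dvd X^t - X^s" if st: "s < t" "t < l" for s t
  proof
    assume "g dvd X^t - X^s"
    define a where "a = t - s"
    have "X^t - X^s = X^s * (X^a - 1)" unfolding a_def using st
      by (simp add: algebra_simps flip: power_add)
    then have "g dvd X^s * (X^a - 1)" using \<open>g dvd X^t - X^s\<close> by simp
    then have ga: "g dvd X^a - 1"
      using nX prime_elem_dvd_mult_iff[OF pg] prime_elem_dvd_power[OF pg] by blast
    have a0: "a > 0" "a < l" unfolding a_def using st by auto
    have "\<not> l dvd a" using a0 by (auto dest: dvd_imp_le)
    then have "coprime l a" using prime_imp_coprime[OF l(1)] by blast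
    then have "coprime a l" by (simp add: coprime_commute)
    then have "gcd a l = 1" by (simp add: coprime_iff_gcd_eq_1)
    then obtain x y where xy: "a * x = l * y + 1" using bezout_nat[of a l] a0 by auto
    have "(X^a - 1) dvd (X^a)^x - 1" by (simp add: power_diff_1_eq)
    then have g1: "g dvd X^(a*x) - 1" using ga by (simp add: power_mult dvd_trans)
    have "a * x = 1 + y * l" using xy by (simp add: mult.commute)
    then have "(a * x) mod l = 1 mod l" by (simp only: mod_mult_self1)
    then have "(X^l - 1) dvd X^(a*x) - X^1" by (rule power_diff_dvd_mod)
    then have g2: "g dvd X^(a*x) - X^1" using gX by (rule dvd_trans[rotated])
    have "g dvd (X^(a*x) - 1) - (X^(a*x) - X^1)" using g1 g2 by (rule dvd_diff)
    then show False using nX1 by simp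
  qed
  have inj: "s = t" if "s < l" "t < l" "g dvd X^t - X^s" for s t
  proof (rule ccontr)
    assume "s \<noteq> t"
    then consider "s < t" | "t < s" by linarith
    then show False
    proof cases
      case 1 then show False using key that by blast
    next
      case 2
      have "X^s - X^t = - (X^t - X^s)" by simp
      then have "g dvd X^s - X^t" using that(3) by (simp only: dvd_minus_iff)
      then show False using key[OF 2 that(1)] by blast
    qed
  qed
  have cQi: "g dvd pcompose g (X^(Q^i mod l))" for i
    using comp_mod[OF gX' dvd_comp_Qi[OF ch]] unfolding X_def Q_def by simp
  have cMi: "g dvd pcompose g (X^((m * Q^i) mod l))" for i
  proof -
    have "g dvd pcompose g ([:0,1:]^(m * Q^i))"
      using comp_mult[OF scr[unfolded X_def] dvd_comp_Qi[OF ch]] unfolding Q_def by simp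
    then show ?thesis using comp_mod[OF gX'] unfolding X_def by simp
  qed
  have disj: "(m * Q^i) mod l \<noteq> Q^j mod l" for i j
    using exp_disjoint[OF l(1,2) cQ[unfolded Q_def] kord[unfolded Q_def] k0 m_def] neg unfolding Q_def by blast
  define T1 where "T1 = (\<lambda>i. Q^i mod l) ` {..<k}"
  define T2 where "T2 = (\<lambda>i. (m * Q^i) mod l) ` {..<k}"
  have injQ: "i = j" if "i < k" "j < k" "[Q^i = Q^j] (mod l)" for i j
  proof -
    have "[i = j] (mod k)" using that(3) order_divides_expdiff[OF cQ] unfolding k_def by blast
    then show ?thesis using that(1,2) cong_less_modulus_unique_nat by blast
  qed
  have cm: "coprime m l"
  proof -
    have "coprime (l - 1) l" using l(2)
      by (metis coprime_diff_one_left_nat Suc_diff_1 less_trans zero_less_numeral)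
    moreover have "coprime q l" using l(3) by (simp add: coprime_commute)
    ultimately show ?thesis unfolding m_def by simp
  qed
  have cT1: "card T1 = k"
    unfolding T1_def by (subst card_image) (auto intro!: inj_onI injQ simp: cong_def)
  have cT2: "card T2 = k"
    unfolding T2_def
  proof (subst card_image)
    show "inj_on (\<lambda>i. m * Q ^ i mod l) {..<k}"
    proof (rule inj_onI)
      fix i j assume "i \<in> {..<k}" "j \<in> {..<k}" "m * Q ^ i mod l = m * Q ^ j mod l"
      then show "i = j" using injQ cong_mult_lcancel_nat[OF cm] by (simp add: cong_def)
    qed
  qed simp
  have dT: "T1 \<inter> T2 = {}"
  proof (rule ccontr)
    assume "T1 \<inter> T2 \<noteq> {}"
    then obtain i j where "Q^i mod l = m * Q^j mod l" unfolding T1_def T2_def by blast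
    then show False using disj[of j i] by simp
  qed
  define T where "T = T1 \<union> T2"
  have cT: "card T = 2 * k" unfolding T_def
    using card_Un_disjoint[of T1 T2] dT cT1 cT2 unfolding T1_def T2_def by simp
  have Tl: "t < l" if "t \<in> T" for t using that l(2) unfolding T_def T1_def T2_def by auto
  have Tg: "g dvd pcompose g (X^t)" if "t \<in> T" for t
    using that cQi cMi unfolding T_def T1_def T2_def by auto
  define R where "R = (\<lambda>t. X^t mod g) ` T"
  have cR: "card R = 2 * k"
  proof -
    have "inj_on (\<lambda>t. X^t mod g) T"
    proof (rule inj_onI)
      fix s t assume "s \<in> T" "t \<in> T" "X^s mod g = X^t mod g"
      then have "g dvd X^s - X^t" by (simp add: mod_eq_dvd_iff)
      then show "s = t" using inj Tl \<open>s \<in> T\<close> \<open>t \<in> T\<close> by metis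
    qed
    then show ?thesis unfolding R_def using cT by (simp add: card_image)
  qed
  define P where "P = map_poly (\<lambda>c. [:c:]) g"
  have "card R \<le> degree P"
  proof (rule root_count[OF pg])
    show "finite R" unfolding R_def T_def T1_def T2_def by simp
    show "\<forall>y\<in>R. g dvd poly P y"
    proof
      fix y assume "y \<in> R"
      then obtain t where t: "t \<in> T" "y = X^t mod g" unfolding R_def by blast
      have "poly P y = pcompose g y" unfolding P_def by (simp add: pcompose_altdef)
      have "(y - X^t) dvd pcompose g y - pcompose g (X^t)" by (rule pcompose_diff_dvd)
      moreover have "g dvd y - X^t"
      proof -
        have "y - X^t = - ((X^t div g) * g)" unfolding t(2)
          using div_mult_mod_eq[of "X^t" g] by (simp add: algebra_simps)
        then show ?thesis by simp
      qed
      ultimately have "g dvd pcompose g y - pcompose g (X^t)" by (rule dvd_trans[rotated])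
      then have "g dvd pcompose g y" using Tg[OF t(1)] by (simp add: dvd_diff_left_iff)
      then show "g dvd poly P y" using \<open>poly P y = pcompose g y\<close> by simp
    qed
    have dlt: "degree (X^t mod g) < degree g" for t
    proof (cases "g dvd X^t")
      case True then show ?thesis using dg by simp
    next
      case False show ?thesis using degree_mod_less_degree[OF \<open>g \<noteq> 0\<close> False] .
    qed
    show "\<forall>a\<in>R. \<forall>b\<in>R. a \<noteq> b \<longrightarrow> \<not> g dvd a - b"
      unfolding R_def using dlt low_deg_not_dvd by blast
    show "\<exists>i. \<not> g dvd Polynomial.coeff P i"
    proof
      have "Polynomial.coeff P (degree g) = 1" unfolding P_def using g(2) by (simp add: coeff_map_poly)
      then show "\<not> g dvd Polynomial.coeff P (degree g)" using \<open>\<not> is_unit g\<close> by simp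
    qed
  qed
  moreover have "degree P = degree g" unfolding P_def by (rule degree_map_poly) simp
  ultimately have "2 * k \<le> k" using cR gd by simp
  then show False using k0 by simp
qed





lemma m1:
  fixes q n j e :: nat
  assumes ch: "prime CHAR('a)" "q = CHAR('a)^e" "card (UNIV :: 'a::{field,finite} set) = q^2"
    and f: "f \<in> monic_irred_factors ([:0,1::'a:]^n - 1)" and n: "n > 0" "n dvd q^j + 1" "odd j"
  shows "SCRIM q f"
proof -
  have f1: "lead_coeff f = 1" "irreducible f" "f dvd [:0,1::'a:]^n - 1"
    using f unfolding monic_irred_factors_def by auto
  define i where "i = (j + 1) div 2"
  have "even (j + 1)" using n(3) by simp
  then have i: "j + 1 = 2 * i" unfolding i_def by simp
  have qi: "q^(j+1) = (q^2)^i" unfolding i by (simp add: power_mult)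
  have c1: "[(n - 1) * q + q = 0] (mod n)"
  proof -
    have "(n - 1) * q + q = n * q" using n(1) by (cases n) auto
    then show ?thesis by (simp add: cong_0_iff)
  qed
  have c2: "[q^(j+1) + q = 0] (mod n)"
  proof -
    have eq: "q^(j+1) + q = q * (q^j + 1)" by (simp add: algebra_simps)
    have "n dvd q * (q^j + 1)" using n(2) by (rule dvd_mult)
    then show ?thesis unfolding cong_0_iff eq .
  qed
  have "[(n - 1) * q + q = q^(j+1) + q] (mod n)" using c1 cong_sym[OF c2] by (rule cong_trans)
  then have "[(n - 1) * q = q^(j+1)] (mod n)" using cong_add_rcancel_nat by blast
  then have "[(q^2)^i = (n - 1) * q] (mod n)" unfolding qi by (rule cong_sym)
  then have md: "(q^2)^i mod n = ((n - 1) * q) mod n" by (simp add: cong_def)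
  have "f dvd pcompose f ([:0,1:] ^ ((n - 1) * q))"
    using comp_mod[OF f1(3) dvd_comp_Qi[OF ch] md] .
  then show ?thesis using dagger_iff[OF ch f1 n(1)] by simp
qed

theorem theorem2p7:
  fixes q n :: nat
  assumes "prime_power q"
    and "card (UNIV :: 'a::{field,finite} set) = q ^ 2"
    and "odd n" and "n > 0" and "coprime n q"
  shows "((\<forall>f \<in> monic_irred_factors ([:0, 1::'a:] ^ n - 1). SCRIM q f)
          \<longleftrightarrow> (\<forall>l. prime l \<and> l dvd n \<longrightarrow>
                 (\<forall>f \<in> monic_irred_factors ([:0, 1::'a:] ^ l - 1). SCRIM q f)))
       \<and> ((\<forall>l. prime l \<and> l dvd n \<longrightarrow>
                 (\<forall>f \<in> monic_irred_factors ([:0, 1::'a:] ^ l - 1). SCRIM q f))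
          \<longleftrightarrow> (\<forall>l. prime l \<and> l dvd n \<longrightarrow> odd (ord l (q ^ 2)) \<and> even (ord l q)))"
proof -
  obtain e where pc: "prime CHAR('a)" and e: "e > 0" "q = CHAR('a)^e"
    using char_setup[OF assms(1,2)] by blast
  note ch = pc e(2) assms(2)
  have lp: "l > 2 \<and> coprime l q \<and> of_nat l \<noteq> (0::'a)" if l: "prime l" "l dvd n" for l
  proof -
    have "l \<ge> 2" using l(1) prime_ge_2_nat by blast
    moreover have "l \<noteq> 2" using l(2) assms(3) by auto
    ultimately have l2: "l > 2" by simp
    obtain r where "n = l * r" using l(2) by (elim dvdE)
    then have cl: "coprime l q" using assms(5) by simp
    have "of_nat l \<noteq> (0::'a)"
    proof
      assume "of_nat l = (0::'a)"
      then have "CHAR('a) dvd l" by (simp add: of_nat_eq_0_iff_char_dvd)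
      moreover have "CHAR('a) dvd q" using e by simp
      ultimately have "is_unit (CHAR('a))" using cl coprime_common_divisor by blast
      then show False using pc by simp
    qed
    then show ?thesis using l2 cl by blast
  qed
  define A where "A = (\<forall>f \<in> monic_irred_factors ([:0, 1::'a:] ^ n - 1). SCRIM q f)"
  define B where "B = (\<forall>l. prime l \<and> l dvd n \<longrightarrow>
                 (\<forall>f \<in> monic_irred_factors ([:0, 1::'a:] ^ l - 1). SCRIM q f))"
  define C where "C = (\<forall>l. prime l \<and> l dvd n \<longrightarrow> odd (ord l (q ^ 2)) \<and> even (ord l q))"
  have AB: "B" if "A"
    unfolding B_def
  proof (intro allI impI ballI)
    fix l f assume l: "prime l \<and> l dvd n" and f: "f \<in> monic_irred_factors ([:0, 1::'a:] ^ l - 1)"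
    have "n mod l = 0 mod l" using l by simp
    then have "([:0,1::'a:] ^ l - 1) dvd [:0,1:] ^ n - [:0,1:] ^ 0" by (rule power_diff_dvd_mod)
    then have "f \<in> monic_irred_factors ([:0, 1::'a:] ^ n - 1)"
      using f unfolding monic_irred_factors_def by (auto intro: dvd_trans)
    then show "SCRIM q f" using that unfolding A_def by blast
  qed
  have BC: "C" if "B"
    unfolding C_def
  proof (intro allI impI)
    fix l assume l: "prime l \<and> l dvd n"
    show "odd (ord l (q ^ 2)) \<and> even (ord l q)"
      using m2[OF ch] l lp that unfolding B_def by blast
  qed
  have CA: "A" if "C"
  proof -
    have "\<forall>l \<in> prime_factors n. \<exists>m. odd m \<and> [int q ^ m = - 1] (mod int l)"
      using that nt_odd_witness unfolding C_def by (auto simp: in_prime_factors_iff)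
    then obtain J where J: "odd J" "\<forall>l \<in> prime_factors n. [int q ^ J = - 1] (mod int l)"
      using nt_common_exponent by blast
    have "\<forall>l. prime l \<and> l dvd n \<longrightarrow> [int q ^ J = - 1] (mod int l)"
      using J(2) assms(4) by (auto simp: in_prime_factors_iff)
    then have "[(int q ^ J) ^ n = - 1] (mod int n)" using nt_lift assms(3) by blast
    then have "int n dvd int (q ^ (J * n) + 1)"
      by (simp add: cong_iff_dvd_diff power_mult add.commute)
    then have dv: "n dvd q ^ (J * n) + 1" by (simp only: int_dvd_int_iff)
    have oj: "odd (J * n)" using J(1) assms(3) by simp
    show ?thesis unfolding A_def using m1[OF ch _ assms(4) dv oj] by blast
  qed
  have "(A \<longleftrightarrow> B) \<and> (B \<longleftrightarrow> C)" using AB BC CA by blast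
  then show ?thesis unfolding A_def B_def C_def .
qed


end
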